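(* For every integer $n\ge 1$, \[ \sum_{k=0}^{n}\Big(-\frac{1}{4}\Big)^k\binom{n}{k}\binom{2k}{k}\,k^2H_{2k} =\frac{n^2}{4^n(2n-1)(2n-3)}\binom{2n}{n}\Big\{\frac{3}{2}H_n-2H_{2n}+\frac{8n^3-4n^2-10n+3}{n(2n-1)(2n-3)}\Big\}. \]
   Context: For an integer $m\ge 0$, $H_m$ denotes the $m$-th harmonic number: $H_0=0$ and $H_m=\sum_{j=1}^m \frac1j$ for $m\ge1$. $\binom{n}{k}$ is the usual binomial coefficient. *)

theory Defs
  imports "HOL-Analysis.Analysis"
begin

end

theory Submission
  imports Defs
begin


lemma central_rec_nat: "Suc k * ((2*Suc k) choose Suc k) = 2*(2*k+1) * ((2*k) choose k)"
proof -
  define A where "A = Suc (2*k) choose k"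
  define B where "B = (2*k) choose k"
  define C where "C = (2*Suc k) choose Suc k"
  have d: "2 * Suc k = Suc (Suc (2*k))" by simp
  have a: "Suc (Suc (2*k)) * (Suc (2*k) choose k) = (Suc (Suc (2*k)) choose Suc k) * Suc k"
    by (rule Suc_times_binomial_eq)
  have e1: "C * Suc k = 2*Suc k * A" using a unfolding A_def C_def d by simp
  have b: "(Suc (2*k) - k) * (Suc (2*k) choose k) = Suc (2*k) * ((Suc (2*k) - 1) choose k)"
    by (rule binomial_absorb_comp)
  have c: "Suc (2*k) - k = Suc k" by simp
  have e2: "Suc k * A = (2*k+1)*B" using b unfolding c A_def B_def by simp
  have "Suc k*(Suc k*C) = Suc k*(C*Suc k)" by (simp only: ac_simps)
  also have "\<dots> = Suc k*(2*Suc k*A)" by (simp only: e1)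
  also have "\<dots> = 2*Suc k*(Suc k*A)" by (simp only: ac_simps)
  also have "\<dots> = 2*Suc k*((2*k+1)*B)" by (simp only: e2)
  also have "\<dots> = Suc k*(2*(2*k+1)*B)" by (simp only: ac_simps)
  finally have "Suc k*(Suc k*C) = Suc k*(2*(2*k+1)*B)" .
  then have "Suc k*C = 2*(2*k+1)*B" by (metis mult_left_cancel nat.distinct(1))
  then show ?thesis unfolding B_def C_def .
qed

lemma central_rec: "real (Suc k) * real ((2*Suc k) choose Suc k) = 2*(2*real k+1) * real ((2*k) choose k)"
proof -
  have "real (Suc k * ((2*Suc k) choose Suc k)) = real (2*(2*k+1) * ((2*k) choose k))"
    by (simp only: central_rec_nat)
  then show ?thesis by (simp only: of_nat_mult of_nat_Suc of_nat_add of_nat_numeral of_nat_1)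
qed

definition bb :: "nat \<Rightarrow> real" where "bb k = (-1/4)^k * real ((2*k) choose k)"

lemma bb_Suc: "2*(real k+1)*bb (Suc k) = -(2*real k+1)*bb k"
proof -
  define C where "C = real ((2*Suc k) choose Suc k)"
  have "2*(real k+1)*bb (Suc k) = (-1/4)^k * (-1/4) * 2 * (real (Suc k) * C)"
    unfolding bb_def C_def[symmetric] by (simp add: algebra_simps)
  also have "\<dots> = -(2*real k+1)*bb k" unfolding C_def central_rec bb_def by (simp add: algebra_simps)
  finally show ?thesis .
qed

lemma bin1: "real (Suc k) * real (Suc n choose Suc k) = real (Suc n) * real (n choose k)"
proof -
  have "real (Suc n * (n choose k)) = real ((Suc n choose Suc k) * Suc k)"
    by (simp only: Suc_times_binomial_eq)
  then show ?thesis by (simp only: of_nat_mult) (simp add: algebra_simps)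
qed

lemma bin2: assumes "k \<le> Suc n"
  shows "(real n + 1 - real k) * real (Suc n choose k) = (real n + 1) * real (n choose k)"
proof -
  have "real ((Suc n - k) * (Suc n choose k)) = real (Suc n * ((Suc n - 1) choose k))"
    by (simp only: binomial_absorb_comp)
  then show ?thesis using assms by (simp only: of_nat_mult of_nat_diff of_nat_Suc diff_Suc_1) (simp add: algebra_simps)
qed

lemma harm2: "harm (2*Suc k) = (harm (2*k) :: real) + 1/(2*real k+1) + 1/(2*real k+2)"
proof -
  have "2*Suc k = Suc (Suc (2*k))" by simp
  then show ?thesis by (simp add: harm_Suc inverse_eq_divide add_ac)
qed

definition QQ :: "real \<Rightarrow> real \<Rightarrow> real" where
 "QQ x k = ((2*x^3-17*x^2-40*x-21) + (-12*x^3-30*x^2-46*x-28)*k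
     + (18*x^3+115*x^2+174*x+77)*k^2 + (-8*x^3-68*x^2-88*x-28)*k^3)"

lemma poly_U:
  fixes x k :: real
  shows "k^2*(4*k+3)*((x+1)*(2*(x+2)*(2*x-1)*x*(x+6)) - (2*x+1)*(x+7)*(x+1)*(2*x-3)*(x+1-k))
     = -(x+1-k)*(2*k+1)*QQ x (k+1) - 2*k*(k+1)*QQ x k"
  unfolding QQ_def by algebra

lemma cancel_k1: fixes k A M b :: real assumes "k+1 \<noteq> 0" shows "(k+1)*(A/(k+1)*M*b) = A*M*b"
  using assms by simp

lemma pt_U:
  fixes x k Bp B B1 b b1 :: real
  assumes k: "k \<ge> 0" and hB: "(x+1)*B = (x+1-k)*Bp" and hb: "2*(k+1)*b1 = -(2*k+1)*b"
    and hB1: "(k+1)*B1 = (x+1)*B"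
  shows "k^2*(4*k+3)/(k+1)*((x+1)*(2*(x+2)*(2*x-1)*x*(x+6))*Bp - (2*x+1)*(x+7)*(x+1)*(2*x-3)*((x+1)*B))*b
     = 2*(B1*b1*(k+1)*QQ x (k+1) - Bp*b*k*QQ x k)"
proof -
  have k1: "k+1 \<noteq> 0" using k by simp
  have "(k+1)*(k^2*(4*k+3)/(k+1)*((x+1)*(2*(x+2)*(2*x-1)*x*(x+6))*Bp - (2*x+1)*(x+7)*(x+1)*(2*x-3)*((x+1)*B))*b)
      = k^2*(4*k+3)*((x+1)*(2*(x+2)*(2*x-1)*x*(x+6))*Bp - (2*x+1)*(x+7)*(x+1)*(2*x-3)*((x+1)*B))*b"
    by (rule cancel_k1[OF k1])
  also have "\<dots> = k^2*(4*k+3)*((x+1)*(2*(x+2)*(2*x-1)*x*(x+6)) - (2*x+1)*(x+7)*(x+1)*(2*x-3)*(x+1-k))*Bp*b"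
    unfolding hB by (simp add: algebra_simps)
  also have "\<dots> = (-(x+1-k)*(2*k+1)*QQ x (k+1) - 2*k*(k+1)*QQ x k)*Bp*b"
    by (simp only: poly_U)
  also have "\<dots> = ((x+1)*B)*(-(2*k+1)*b)*QQ x (k+1) - 2*k*(k+1)*QQ x k*Bp*b"
    unfolding hB by (simp add: algebra_simps)
  also have "\<dots> = ((k+1)*B1)*(2*(k+1)*b1)*QQ x (k+1) - 2*k*(k+1)*QQ x k*Bp*b"
    unfolding hB1 hb ..
  also have "\<dots> = (k+1)*(2*(B1*b1*(k+1)*QQ x (k+1) - Bp*b*k*QQ x k))"
    by (simp add: algebra_simps)
  finally show ?thesis using k1 by simp
qed

lemma pt_S:
  fixes x k Bp B B1 b b1 h :: real
  assumes k: "k \<ge> 0" and x: "x \<ge> 1" and hB: "(x+1)*B = (x+1-k)*Bp" and hb: "2*(k+1)*b1 = -(2*k+1)*b"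
    and hB1: "(k+1)*B1 = (x+1)*B"
  shows "(Bp - (x+1)*(2*x-3)/(2*x^2)*B)*b*k^2*h
    = -(1/x^2)*((h + 1/(2*k+1) + 1/(2*k+2))*(B1*b1*(k+1)^2*k^2) - h*(Bp*b*k^2*(k-1)^2))
      - (x+1)/(4*x^2)*(B*b*(k^2*(4*k+3)/(k+1)))"
proof -
  have k1: "k+1 \<noteq> 0" "2*k+1 \<noteq> 0" "2*k+2 \<noteq> 0" "x \<noteq> 0" "x+1 \<noteq> 0" using k x by auto
  have g: "B1*b1*(k+1)^2 = -(x+1)*(2*k+1)*B*b/2"
  proof -
    have "2*(B1*b1*(k+1)^2) = ((k+1)*B1)*(2*(k+1)*b1)" by (simp add: algebra_simps power2_eq_square)
    also have "\<dots> = -(x+1)*(2*k+1)*B*b" unfolding hB1 hb by (simp add: algebra_simps)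
    finally show ?thesis by simp
  qed
  define sv where "sv = (4*k+3)/(k+1)"
  have a1: "1/(2*k+1)*(2*k+1) = 1" using k1 by simp
  have a2: "1/(2*k+2)*(2*k+1) = sv/2 - 1"
  proof -
    have "sv/2 = (4*k+3)/(2*k+2)" unfolding sv_def by simp
    also have "\<dots> = ((2*k+2) + (2*k+1))/(2*k+2)" by (simp add: algebra_simps)
    also have "\<dots> = (2*k+2)/(2*k+2) + (2*k+1)/(2*k+2)" by (rule add_divide_distrib)
    also have "\<dots> = 1 + (2*k+1)/(2*k+2)" using k1 by simp
    finally have ss: "sv/2 = 1 + (2*k+1)/(2*k+2)" .
    have "1/(2*k+2)*(2*k+1) = (2*k+1)/(2*k+2)" by simp
    then show ?thesis using ss by linarith
  qed
  have A: "(h + 1/(2*k+1) + 1/(2*k+2)) * (2*k+1) = h*(2*k+1) + sv/2"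
    by (simp only: distrib_right a1 a2)
  have t1: "(h + 1/(2*k+1) + 1/(2*k+2))*(B1*b1*(k+1)^2*k^2) = -(((x+1)*B)*b*k^2/2)*(h*(2*k+1) + sv/2)"
  proof -
    define uu where "uu = h + 1/(2*k+1) + 1/(2*k+2)"
    have "uu*(B1*b1*(k+1)^2*k^2) = -(((x+1)*B)*b*k^2/2)*(uu * (2*k+1))"
      unfolding g by (simp add: algebra_simps)
    then show ?thesis unfolding uu_def A .
  qed
  have t3: "(x+1)/(4*x^2)*(B*b*(k^2*(4*k+3)/(k+1))) = 1/(4*x^2)*(((x+1)*B)*b*k^2* sv)"
    using k1 by (simp add: sv_def field_simps)
  have t0: "(Bp - (x+1)*(2*x-3)/(2*x^2)*B)*b*k^2*h = (Bp - (2*x-3)/(2*x^2)*((x+1)*B))*b*k^2*h"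
    by (simp add: algebra_simps)
  show ?thesis unfolding t0 t1 t3 hB using k1
    by (simp add: field_simps) algebra
qed

definition UU :: "nat \<Rightarrow> real" where
  "UU n = (\<Sum>k=0..n. real (n choose k) * bb k * (real k^2*(4*real k+3)/(real k+1)))"

lemma UU_ext: "UU n = (\<Sum>k=0..Suc n. real (n choose k) * bb k * (real k^2*(4*real k+3)/(real k+1)))"
  unfolding UU_def by (simp add: sum.atLeast0_atMost_Suc)

lemma UU_rec:
  fixes n :: nat
  shows "(real n+1)*(2*(real n+2)*(2*real n-1)*real n*(real n+6))*UU (Suc n)
       = (2*real n+1)*(real n+7)*(real n+1)*(2*real n-3)*((real n+1)*UU n)"
proof -
  define x where "x = real n"
  define Dx where "Dx = 2*(x+2)*(2*x-1)*x*(x+6)"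
  define Nx where "Nx = (2*x+1)*(x+7)*(x+1)*(2*x-3)"
  define T where "T = (\<lambda>k. real(Suc n choose k)*bb k*real k*QQ x (real k))"
  define sk where "sk = (\<lambda>k::nat. real k^2*(4*real k+3)/(real k+1))"
  have pt: "sk k*((x+1)*Dx*real(Suc n choose k) - Nx*((x+1)*real(n choose k)))*bb k = 2*(T (Suc k) - T k)"
    if "k \<in> {0..Suc n}" for k
  proof -
    have kk: "k \<le> Suc n" using that by simp
    have hB: "(x+1)*real(n choose k) = (x+1-real k)*real(Suc n choose k)"
      using bin2[OF kk] unfolding x_def by (simp add: algebra_simps)
    have hb: "2*(real k+1)*bb (Suc k) = -(2*real k+1)*bb k" by (rule bb_Suc)
    have hB1: "(real k+1)*real(Suc n choose Suc k) = (x+1)*real(n choose k)"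
      using bin1[of k n] unfolding x_def by (simp add: algebra_simps)
    have "sk k*((x+1)*Dx*real(Suc n choose k) - Nx*((x+1)*real(n choose k)))*bb k
       = 2*(real(Suc n choose Suc k)*bb (Suc k)*(real k+1)*QQ x (real k+1) - real(Suc n choose k)*bb k*real k*QQ x (real k))"
      unfolding sk_def Dx_def Nx_def by (rule pt_U[OF _ hB hb hB1]) simp
    also have "\<dots> = 2*(T (Suc k) - T k)" unfolding T_def by (simp add: add.commute)
    finally show ?thesis .
  qed
  have "(\<Sum>k=0..Suc n. sk k*((x+1)*Dx*real(Suc n choose k) - Nx*((x+1)*real(n choose k)))*bb k)
      = (\<Sum>k=0..Suc n. 2*(T (Suc k) - T k))"
    by (rule sum.cong[OF refl pt])
  also have "\<dots> = 2*(T (Suc (Suc n)) - T 0)"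
    by (simp only: sum_distrib_left[symmetric] sum_Suc_diff[of 0 "Suc n"] le0)
  also have "\<dots> = 0" unfolding T_def by (simp add: binomial_eq_0)
  finally have z: "(\<Sum>k=0..Suc n. sk k*((x+1)*Dx*real(Suc n choose k) - Nx*((x+1)*real(n choose k)))*bb k) = 0" .
  have "(\<Sum>k=0..Suc n. sk k*((x+1)*Dx*real(Suc n choose k) - Nx*((x+1)*real(n choose k)))*bb k)
     = (x+1)*Dx*(\<Sum>k=0..Suc n. real (Suc n choose k) * bb k * sk k)
       - Nx*(x+1)*(\<Sum>k=0..Suc n. real (n choose k) * bb k * sk k)"
    by (simp add: sum_distrib_left sum_subtractf algebra_simps)
  also have "\<dots> = (x+1)*Dx*UU (Suc n) - Nx*(x+1)*UU n"
    unfolding UU_ext[of n] UU_def[of "Suc n"] sk_def ..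
  finally show ?thesis using z unfolding x_def[symmetric] Dx_def[symmetric] Nx_def[symmetric]
    by (simp add: algebra_simps)
qed

lemma alg_U:
  fixes x c p :: real
  assumes x: "x \<ge> 1" and x3: "2*x-3 \<noteq> 0" and p: "p > 0"
  shows "(2*x+1)*(x+7)*(x+1)*(2*x-3)*((x+1)*(c/p*(x*(x+6)/((x+1)*(2*x-3)))))
         / ((x+1)*(2*(x+2)*(2*x-1)*x*(x+6)))
       = (2*(2*x+1)*c/(x+1))/(4*p) * ((x+1)*(x+7)/((x+2)*(2*x-1)))"
proof -
  have nz: "x \<noteq> 0" "x+1 \<noteq> 0" "x+2 \<noteq> 0" "x+6 \<noteq> 0" "2*x-1 \<noteq> 0" "p \<noteq> 0" using x p by auto
  show ?thesis using nz x3 by (simp add: divide_simps) (simp add: algebra_simps)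
qed

lemma alg_R:
  fixes x c p h1 h2 :: real
  assumes x: "x \<ge> 1" and x3: "2*x-3 \<noteq> 0" and p: "p > 0"
  shows "(x+1)*(2*x-3)/(2*x^2) * (x^2/(p*(2*x-1)*(2*x-3))*c*(3/2*h1 - 2*h2 + (8*x^3-4*x^2-10*x+3)/(x*(2*x-1)*(2*x-3))))
      - (x+1)/(4*x^2) * (c/p*(x*(x+6)/((x+1)*(2*x-3))))
    = (x+1)^2/((4*p)*(2*x+1)*(2*x-1))*(2*(2*x+1)*c/(x+1))*(3/2*(h1+1/(x+1)) - 2*(h2+1/(2*x+1)+1/(2*x+2))
        + (8*(x+1)^3-4*(x+1)^2-10*(x+1)+3)/((x+1)*(2*x+1)*(2*x-1)))"
proof -
  have nz: "x \<noteq> 0" "x+1 \<noteq> 0" "2*x+1 \<noteq> 0" "2*x+2 \<noteq> 0" "2*x-1 \<noteq> 0" "p \<noteq> 0" using x p by auto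
  show ?thesis using nz x3 by (simp add: divide_simps) algebra
qed

lemma two_n_3: "2*real n - 3 \<noteq> (0::real)"
proof
  assume "2*real n - 3 = (0::real)"
  then have "real (2*n) = real (3::nat)" by simp
  then have "2*n = 3" by (simp only: of_nat_eq_iff)
  then show False by presburger
qed

lemma UU_closed: "n \<ge> 1 \<Longrightarrow> UU n = real((2*n) choose n)/4^n * (real n*(real n+6)/((real n+1)*(2*real n-3)))"
proof (induction n rule: nat_induct_at_least)
  case base
  then show ?case by (simp add: UU_def bb_def)
next
  case (Suc n)
  define x where "x = real n"
  define c where "c = real((2*n) choose n)"
  define p where "p = (4::real)^n"
  have x: "x \<ge> 1" using Suc.hyps unfolding x_def by simp
  have x3: "2*x-3 \<noteq> 0" unfolding x_def by (rule two_n_3)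
  have p: "p > 0" unfolding p_def by simp
  have IH: "UU n = c/p*(x*(x+6)/((x+1)*(2*x-3)))" using Suc.IH unfolding x_def c_def p_def .
  have rec: "(x+1)*(2*(x+2)*(2*x-1)*x*(x+6))*UU (Suc n) = (2*x+1)*(x+7)*(x+1)*(2*x-3)*((x+1)*UU n)"
    unfolding x_def by (rule UU_rec)
  have D: "(x+1)*(2*(x+2)*(2*x-1)*x*(x+6)) \<noteq> 0" using x by auto
  have "UU (Suc n) = (2*x+1)*(x+7)*(x+1)*(2*x-3)*((x+1)*UU n) / ((x+1)*(2*(x+2)*(2*x-1)*x*(x+6)))"
    using rec D by (simp add: field_simps)
  also have "\<dots> = (2*(2*x+1)*c/(x+1))/(4*p) * ((x+1)*(x+7)/((x+2)*(2*x-1)))"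
    unfolding IH by (rule alg_U[OF x x3 p])
  also have "\<dots> = real((2*Suc n) choose Suc n)/4^(Suc n) * (real (Suc n)*(real (Suc n)+6)/((real (Suc n)+1)*(2*real (Suc n)-3)))"
  proof -
    have e3: "real((2*Suc n) choose Suc n) = 2*(2*x+1)*c/(x+1)"
      using central_rec[of n] x unfolding x_def c_def by (simp add: field_simps)
    have e2: "(4::real)^Suc n = 4*p" unfolding p_def by simp
    have e1: "real (Suc n) = x+1" unfolding x_def by simp
    show ?thesis unfolding e3 e2 e1 by (simp add: algebra_simps)
  qed
  finally show ?case .
qed

definition SS :: "nat \<Rightarrow> real" where
  "SS n = (\<Sum>k=0..n. real (n choose k) * bb k * real k^2 * harm (2*k))"

lemma SS_ext: "SS n = (\<Sum>k=0..Suc n. real (n choose k) * bb k * real k^2 * harm (2*k))"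
  unfolding SS_def by (simp add: sum.atLeast0_atMost_Suc)

lemma SS_rec:
  fixes n :: nat assumes n: "n \<ge> 1"
  shows "SS (Suc n) = (real n+1)*(2*real n-3)/(2*real n^2)*SS n - (real n+1)/(4*real n^2)*UU n"
proof -
  define x where "x = real n"
  have x: "x \<ge> 1" using n unfolding x_def by simp
  define F where "F = (\<lambda>k. harm (2*k) * (real(Suc n choose k)*bb k*real k^2*(real k-1)^2))"
  define sk where "sk = (\<lambda>k::nat. real k^2*(4*real k+3)/(real k+1))"
  define \<rho> where "\<rho> = (x+1)*(2*x-3)/(2*x^2)"
  have pt: "(real(Suc n choose k) - \<rho>*real(n choose k))*bb k*real k^2*harm(2*k)
       = -(1/x^2)*(F (Suc k) - F k) - (x+1)/(4*x^2)*(real(n choose k)*bb k* sk k)"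
    if "k \<in> {0..Suc n}" for k
  proof -
    have kk: "k \<le> Suc n" using that by simp
    have hB: "(x+1)*real(n choose k) = (x+1-real k)*real(Suc n choose k)"
      using bin2[OF kk] unfolding x_def by (simp add: algebra_simps)
    have hb: "2*(real k+1)*bb (Suc k) = -(2*real k+1)*bb k" by (rule bb_Suc)
    have hB1: "(real k+1)*real(Suc n choose Suc k) = (x+1)*real(n choose k)"
      using bin1[of k n] unfolding x_def by (simp add: algebra_simps)
    have FS: "F (Suc k) = (harm(2*k) + 1/(2*real k+1) + 1/(2*real k+2))*(real(Suc n choose Suc k)*bb(Suc k)*(real k+1)^2*real k^2)"
      unfolding F_def harm2 by (simp add: algebra_simps)
    have F0: "F k = harm(2*k) * (real(Suc n choose k)*bb k*real k^2*(real k-1)^2)" unfolding F_def ..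
    show ?thesis unfolding FS F0 \<rho>_def sk_def
      by (rule pt_S[OF _ x hB hb hB1]) simp
  qed
  have "(\<Sum>k=0..Suc n. (real(Suc n choose k) - \<rho>*real(n choose k))*bb k*real k^2*harm(2*k))
     = (\<Sum>k=0..Suc n. -(1/x^2)*(F (Suc k) - F k) - (x+1)/(4*x^2)*(real(n choose k)*bb k* sk k))"
    by (rule sum.cong[OF refl pt])
  also have "\<dots> = (\<Sum>k=0..Suc n. -(1/x^2)*(F (Suc k) - F k)) - (\<Sum>k=0..Suc n. (x+1)/(4*x^2)*(real(n choose k)*bb k* sk k))"
    by (rule sum_subtractf)
  also have "\<dots> = -(1/x^2)*(\<Sum>k=0..Suc n. F (Suc k) - F k) - (x+1)/(4*x^2)*(\<Sum>k=0..Suc n. real(n choose k)*bb k* sk k)"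
    by (simp only: sum_distrib_left)
  also have "(\<Sum>k=0..Suc n. F (Suc k) - F k) = F (Suc (Suc n)) - F 0"
    by (rule sum_Suc_diff) simp
  also have "F (Suc (Suc n)) - F 0 = 0" unfolding F_def by (simp add: binomial_eq_0)
  also have "(\<Sum>k=0..Suc n. real(n choose k)*bb k* sk k) = UU n"
    unfolding UU_ext[of n] sk_def ..
  finally have main: "(\<Sum>k=0..Suc n. (real(Suc n choose k) - \<rho>*real(n choose k))*bb k*real k^2*harm(2*k))
     = -(1/x^2)*0 - (x+1)/(4*x^2)*UU n" .
  have "(\<Sum>k=0..Suc n. (real(Suc n choose k) - \<rho>*real(n choose k))*bb k*real k^2*harm(2*k))
      = SS (Suc n) - \<rho> * SS n"
    unfolding SS_ext[of n] SS_def[of "Suc n"]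
    by (simp add: sum_subtractf sum_distrib_left algebra_simps)
  then show ?thesis using main unfolding \<rho>_def x_def by (simp add: algebra_simps)
qed


lemma SS_eq: "(\<Sum>k=0..n. (-1/4::real)^k * real (n choose k) * real ((2*k) choose k)
            * (real k)^2 * harm (2*k)) = SS n"
  unfolding SS_def bb_def by (rule sum.cong) (simp_all add: mult_ac)

theorem theorem9:
  fixes n :: nat
  assumes "n \<ge> 1"
  shows "(\<Sum>k=0..n. (-1/4::real)^k * real (n choose k) * real ((2*k) choose k)
            * (real k)^2 * harm (2*k))
       = (real n)^2 / (4^n * (2 * real n - 1) * (2 * real n - 3)) * real ((2*n) choose n)
         * (3/2 * harm n - 2 * harm (2*n)
            + (8 * (real n)^3 - 4 * (real n)^2 - 10 * real n + 3)
              / (real n * (2 * real n - 1) * (2 * real n - 3)))"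
  unfolding SS_eq using assms
proof (induction n rule: nat_induct_at_least)
  case base
  have h0: "harm 0 = (0::real)" by (simp add: harm_def)
  have h2': "harm (Suc (Suc 0)) = (3/2::real)" by (simp only: harm_Suc h0) simp
  have h2: "harm 2 = (3/2::real)" using h2' by (simp add: numeral_2_eq_2)
  have h1: "harm (Suc 0) = (1::real)" by (simp only: harm_Suc h0) simp
  show ?case unfolding SS_def bb_def by (simp add: h2 h1)
next
  case (Suc n)
  define x where "x = real n"
  define c where "c = real((2*n) choose n)"
  define p where "p = (4::real)^n"
  define h1 where "h1 = (harm n :: real)"
  define h2 where "h2 = (harm (2*n) :: real)"
  have x: "x \<ge> 1" using Suc.hyps unfolding x_def by simp
  have x3: "2*x-3 \<noteq> 0" unfolding x_def by (rule two_n_3)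
  have p: "p > 0" unfolding p_def by simp
  have IH: "SS n = x^2/(p*(2*x-1)*(2*x-3))*c*(3/2*h1 - 2*h2 + (8*x^3-4*x^2-10*x+3)/(x*(2*x-1)*(2*x-3)))"
    using Suc.IH unfolding x_def c_def p_def h1_def h2_def by (simp add: mult_ac)
  have U: "UU n = c/p*(x*(x+6)/((x+1)*(2*x-3)))"
    using UU_closed[OF Suc.hyps] unfolding x_def c_def p_def .
  have "SS (Suc n) = (x+1)*(2*x-3)/(2*x^2)*SS n - (x+1)/(4*x^2)*UU n"
    using SS_rec[OF Suc.hyps] unfolding x_def .
  also have "\<dots> = (x+1)^2/((4*p)*(2*x+1)*(2*x-1))*(2*(2*x+1)*c/(x+1))*(3/2*(h1+1/(x+1)) - 2*(h2+1/(2*x+1)+1/(2*x+2))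
        + (8*(x+1)^3-4*(x+1)^2-10*(x+1)+3)/((x+1)*(2*x+1)*(2*x-1)))"
    unfolding IH U by (rule alg_R[OF x x3 p])
  also have "\<dots> = (real (Suc n))^2 / (4^(Suc n) * (2 * real (Suc n) - 1) * (2 * real (Suc n) - 3)) * real ((2*Suc n) choose Suc n)
         * (3/2 * harm (Suc n) - 2 * harm (2*Suc n)
            + (8 * (real (Suc n))^3 - 4 * (real (Suc n))^2 - 10 * real (Suc n) + 3)
              / (real (Suc n) * (2 * real (Suc n) - 1) * (2 * real (Suc n) - 3)))"
  proof -
    have e3: "real((2*Suc n) choose Suc n) = 2*(2*x+1)*c/(x+1)"
      using central_rec[of n] x unfolding x_def c_def by (simp add: field_simps)
    have e2: "(4::real)^Suc n = 4*p" unfolding p_def by simp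
    have e4: "harm (Suc n) = h1 + 1/(x+1)" unfolding h1_def x_def
      by (simp add: harm_Suc inverse_eq_divide add.commute)
    have e5: "harm (2*Suc n) = h2 + 1/(2*x+1) + 1/(2*x+2)" unfolding h2_def x_def by (rule harm2)
    have e1: "real (Suc n) = x+1" unfolding x_def by simp
    have e6: "2*(x+1)-1 = 2*x+1" "2*(x+1)-3 = 2*x-1" by simp_all
    show ?thesis unfolding e3 e2 e4 e5 e1 e6 by (simp add: mult_ac)
  qed
  finally show ?case .
qed

end
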